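(* Let $(X_1,Y_1),\dots,(X_{n+1},Y_{n+1})$ be exchangeable random elements of $\mathcal{X}\times\mathcal{Y}$, let $f$ be a fixed model, $\mathcal{L}(f,x,y)\in[0,1]$ a known risk map, and $s:\mathcal{X}\to[0,1]$ a fixed score function (independent of the data). Write $L_i=\mathcal{L}(f,X_i,Y_i)$ for $i\in[n+1]$. For any fixed $\gamma\in(0,1)$, the random variable $E_{\gamma,n+1}$ defined below satisfies $E_{\gamma,n+1}\ge0$ and $\mathbb{E}[L_{n+1}E_{\gamma,n+1}]\le 1$.
   Context: Let $\mathcal{M}=\{s(X_i)\}_{i=1}^{n+1}$. For $t\in\mathbb{R}$ and $\ell\in[0,1]$ define $F(t;\ell)=\frac{1}{n+1}\big(\sum_{i=1}^n L_i\mathbf{1}\{s(X_i)\le t\}+\ell\,\mathbf{1}\{s(X_{n+1})\le t\}\big)$ and $t_\gamma(\ell)=\max\{t\in\mathcal{M}:F(t;\ell)\le\gamma\}$, with $\max\emptyset=-\infty$. Define $$E_{\gamma,n+1}=\inf_{\ell\in[0,1]}\frac{(n+1)\mathbf{1}\{s(X_{n+1})\le t_\gamma(\ell)\}}{\sum_{i=1}^n L_i\mathbf{1}\{s(X_i)\le t_\gamma(\ell)\}+\ell\,\mathbf{1}\{s(X_{n+1})\le t_\gamma(\ell)\}},$$ where each ratio is $0$ when its numerator is $0$ and $+\infty$ when its numerator is positive and denominator is $0$; also $E_{\gamma,n+1}=0$ if $\inf_{\ell\in[0,1]}t_\gamma(\ell)=-\infty$. *)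

theory Defs
  imports "HOL-Probability.Probability"
begin

text \<open>Data are indexed by 1..n+1; index n+1 is the test point.
  sc i = s(X_i) (scores), Ls i = L_i (losses).\<close>

definition F_hat :: "nat \<Rightarrow> (nat \<Rightarrow> real) \<Rightarrow> (nat \<Rightarrow> real) \<Rightarrow> real \<Rightarrow> real \<Rightarrow> real" where
  "F_hat n Ls sc t l =
     ((\<Sum>i=1..n. Ls i * (if sc i \<le> t then 1 else 0)) + l * (if sc (n+1) \<le> t then 1 else 0))
     / real (n + 1)"

definition t_gamma :: "nat \<Rightarrow> (nat \<Rightarrow> real) \<Rightarrow> (nat \<Rightarrow> real) \<Rightarrow> real \<Rightarrow> real \<Rightarrow> ereal" where
  "t_gamma n Ls sc \<gamma> l =
     (let S = {t \<in> sc ` {1..n+1}. F_hat n Ls sc t l \<le> \<gamma>}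
      in if S = {} then -\<infinity> else ereal (Max S))"

definition E_ratio :: "nat \<Rightarrow> (nat \<Rightarrow> real) \<Rightarrow> (nat \<Rightarrow> real) \<Rightarrow> real \<Rightarrow> real \<Rightarrow> ereal" where
  "E_ratio n Ls sc \<gamma> l =
     (let t = t_gamma n Ls sc \<gamma> l;
          num = real (n + 1) * (if ereal (sc (n+1)) \<le> t then 1 else 0);
          den = (\<Sum>i=1..n. Ls i * (if ereal (sc i) \<le> t then 1 else 0))
                + l * (if ereal (sc (n+1)) \<le> t then 1 else 0)
      in if num = 0 then 0 else if den = 0 then \<infinity> else ereal (num / den))"

definition E_gamma :: "nat \<Rightarrow> (nat \<Rightarrow> real) \<Rightarrow> (nat \<Rightarrow> real) \<Rightarrow> real \<Rightarrow> ereal" where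
  "E_gamma n Ls sc \<gamma> =
     (if (INF l\<in>{0..1}. t_gamma n Ls sc \<gamma> l) = -\<infinity> then 0
      else (INF l\<in>{0..1}. E_ratio n Ls sc \<gamma> l))"

end

theory Submission
  imports Defs
begin

definition selF :: "nat set \<Rightarrow> (nat \<Rightarrow> real) \<Rightarrow> (nat \<Rightarrow> real) \<Rightarrow> real \<Rightarrow> nat \<Rightarrow> bool" where
  "selF A Lv Sv c j = (\<exists>k\<in>A. (\<Sum>i\<in>A. Lv i * (if Sv i \<le> Sv k then 1 else 0)) \<le> c \<and> Sv j \<le> Sv k)"

definition DF :: "nat set \<Rightarrow> (nat \<Rightarrow> real) \<Rightarrow> (nat \<Rightarrow> real) \<Rightarrow> real \<Rightarrow> real" where
  "DF A Lv Sv c = (\<Sum>i\<in>A. Lv i * (if selF A Lv Sv c i then 1 else 0))"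

definition GF :: "nat set \<Rightarrow> (nat \<Rightarrow> real) \<Rightarrow> (nat \<Rightarrow> real) \<Rightarrow> real \<Rightarrow> real \<Rightarrow> nat \<Rightarrow> ennreal" where
  "GF A Lv Sv c m j = ennreal (m * Lv j * (if selF A Lv Sv c j then 1 else 0) / DF A Lv Sv c)"

lemma sum_split_last:
  "(\<Sum>i\<in>{1..n+1}. g i) = (\<Sum>i=1..n. g i) + g (n+1)" for g :: "nat \<Rightarrow> real"
  by (simp add: sum.cl_ivl_Suc)

lemma tg_iff:
  assumes "l = Ls (n+1)"
  shows "(ereal (sc j) \<le> t_gamma n Ls sc \<gamma> l) = selF {1..n+1} Ls sc (\<gamma> * real (n+1)) j"
proof -
  define S where "S = {t \<in> sc ` {1..n+1}. F_hat n Ls sc t l \<le> \<gamma>}"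
  have F: "F_hat n Ls sc t l \<le> \<gamma> \<longleftrightarrow> (\<Sum>i\<in>{1..n+1}. Ls i * (if sc i \<le> t then 1 else 0)) \<le> \<gamma> * real (n+1)" for t
    unfolding F_hat_def assms sum_split_last by (simp add: divide_le_eq mult.commute)
  have fin: "finite S" unfolding S_def by auto
  have S_iff: "(\<exists>t\<in>S. sc j \<le> t) = selF {1..n+1} Ls sc (\<gamma> * real (n+1)) j"
    unfolding S_def selF_def F by auto
  show ?thesis
  proof (cases "S = {}")
    case True
    then show ?thesis using S_iff unfolding t_gamma_def S_def[symmetric] by auto
  next
    case False
    then show ?thesis using S_iff fin unfolding t_gamma_def S_def[symmetric] by (auto simp: Max_ge_iff)
  qed
qed

lemma DF_nonneg: "(\<And>i. i \<in> A \<Longrightarrow> 0 \<le> Lv i) \<Longrightarrow> 0 \<le> DF A Lv Sv c"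
  unfolding DF_def by (auto intro!: sum_nonneg)

lemma DF_ge: "finite A \<Longrightarrow> (\<And>i. i \<in> A \<Longrightarrow> 0 \<le> Lv i) \<Longrightarrow> j \<in> A \<Longrightarrow> selF A Lv Sv c j \<Longrightarrow> Lv j \<le> DF A Lv Sv c"
  unfolding DF_def
  using member_le_sum[of j A "\<lambda>i. Lv i * (if selF A Lv Sv c i then 1 else 0)"] by auto

lemma E_nonneg:
  assumes "\<And>i. 0 \<le> Ls i"
  shows "0 \<le> E_gamma n Ls sc \<gamma>"
proof -
  have "0 \<le> E_ratio n Ls sc \<gamma> l" if "l \<in> {0..1}" for l
    using that assms unfolding E_ratio_def Let_def
    by (auto intro!: divide_nonneg_nonneg sum_nonneg add_nonneg_nonneg)
  then show ?thesis unfolding E_gamma_def by (auto intro: INF_greatest)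
qed

lemma pointwise:
  assumes "\<And>i. 0 \<le> Ls i" "\<And>i. Ls i \<le> 1"
  shows "e2ennreal (ereal (Ls (n+1)) * E_gamma n Ls sc \<gamma>) \<le> GF {1..n+1} Ls sc (\<gamma> * real (n+1)) (real (n+1)) (n+1)"
proof -
  define l where "l = Ls (n+1)"
  define A where "A = {1..n+1}"
  define c where "c = \<gamma> * real (n+1)"
  have l01: "l \<in> {0..1}" using assms unfolding l_def by auto
  have le: "E_gamma n Ls sc \<gamma> \<le> E_ratio n Ls sc \<gamma> l \<or> E_gamma n Ls sc \<gamma> = 0"
    unfolding E_gamma_def using l01 by (auto intro: INF_lower)
  have iff: "\<And>j. (ereal (sc j) \<le> t_gamma n Ls sc \<gamma> l) = selF A Ls sc c j"
    unfolding A_def c_def by (rule tg_iff) (simp add: l_def)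
  have den: "(\<Sum>i=1..n. Ls i * (if ereal (sc i) \<le> t_gamma n Ls sc \<gamma> l then 1 else 0))
                + l * (if ereal (sc (n+1)) \<le> t_gamma n Ls sc \<gamma> l then 1 else 0) = DF A Ls sc c"
    unfolding DF_def A_def sum_split_last using iff by (simp add: A_def l_def)
  have ER: "E_ratio n Ls sc \<gamma> l = (if selF A Ls sc c (n+1) then (if DF A Ls sc c = 0 then \<infinity> else ereal (real (n+1) / DF A Ls sc c)) else 0)"
    unfolding E_ratio_def Let_def iff den[unfolded iff] by simp
  have R: "ereal l * E_ratio n Ls sc \<gamma> l = ereal (real (n+1) * l * (if selF A Ls sc c (n+1) then 1 else 0) / DF A Ls sc c)"
  proof (cases "selF A Ls sc c (n+1)")
    case False
    then show ?thesis unfolding ER by simp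
  next
    case True
    have "l \<le> DF A Ls sc c" unfolding l_def A_def
      by (rule DF_ge) (use assms True in \<open>auto simp: A_def\<close>)
    then show ?thesis using True l01 unfolding ER
      by (auto simp: zero_ereal_def)
  qed
  have "ereal l * E_gamma n Ls sc \<gamma> \<le> ereal l * E_ratio n Ls sc \<gamma> l \<or> ereal l * E_gamma n Ls sc \<gamma> = 0"
    using le l01 by (auto intro: ereal_mult_left_mono)
  then have "e2ennreal (ereal l * E_gamma n Ls sc \<gamma>) \<le> e2ennreal (ereal l * E_ratio n Ls sc \<gamma> l)"
    by (auto intro: e2ennreal_mono simp: e2ennreal_neg simp flip: zero_ereal_def)
  then show ?thesis unfolding R GF_def l_def[symmetric] A_def[symmetric] c_def[symmetric]
    by (simp add: mult.assoc)
qed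

lemma selF_perm:
  assumes "p permutes A" "finite A"
  shows "selF A (\<lambda>i. Lv (p i)) (\<lambda>i. Sv (p i)) c j = selF A Lv Sv c (p j)"
proof -
  have sum: "(\<Sum>i\<in>A. Lv (p i) * (if Sv (p i) \<le> t then 1 else 0)) = (\<Sum>i\<in>A. Lv i * (if Sv i \<le> t then 1 else 0))" for t
    using sum.permute[OF assms(1), of "\<lambda>i. Lv i * (if Sv i \<le> t then 1 else 0)"] by (simp add: comp_def)
  have ex: "(\<exists>k\<in>A. P (p k)) = (\<exists>k\<in>A. P k)" for P
    using permutes_image[OF assms(1)] by (metis imageE image_eqI)
  show ?thesis unfolding selF_def sum using ex[of "\<lambda>k. (\<Sum>i\<in>A. Lv i * (if Sv i \<le> Sv k then 1 else 0)) \<le> c \<and> Sv (p j) \<le> Sv k"] by simp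
qed

lemma DF_perm:
  assumes "p permutes A" "finite A"
  shows "DF A (\<lambda>i. Lv (p i)) (\<lambda>i. Sv (p i)) c = DF A Lv Sv c"
  unfolding DF_def selF_perm[OF assms]
  using sum.permute[OF assms(1), of "\<lambda>i. Lv i * (if selF A Lv Sv c i then 1 else 0)"] by (simp add: comp_def)

lemma GF_perm:
  assumes "p permutes A" "finite A"
  shows "GF A (\<lambda>i. Lv (p i)) (\<lambda>i. Sv (p i)) c m j = GF A Lv Sv c m (p j)"
  unfolding GF_def DF_perm[OF assms] selF_perm[OF assms] ..

lemma GF_cong:
  assumes "\<And>i. i \<in> A \<Longrightarrow> Lv i = Lv' i" "\<And>i. i \<in> A \<Longrightarrow> Sv i = Sv' i" "j \<in> A"
  shows "GF A Lv Sv c m j = GF A Lv' Sv' c m j"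
proof -
  have "selF A Lv Sv c k = selF A Lv' Sv' c k" if "k \<in> A" for k
    unfolding selF_def using assms that by (auto cong: sum.cong)
  moreover have "DF A Lv Sv c = DF A Lv' Sv' c"
    unfolding DF_def using assms calculation by (auto intro!: sum.cong)
  ultimately show ?thesis unfolding GF_def using assms by simp
qed

lemma GF_sum:
  assumes "finite A" "\<And>i. i \<in> A \<Longrightarrow> 0 \<le> Lv i" "0 \<le> m"
  shows "(\<Sum>j\<in>A. GF A Lv Sv c m j) \<le> ennreal m"
proof -
  have "(\<Sum>j\<in>A. GF A Lv Sv c m j) = ennreal (\<Sum>j\<in>A. m * Lv j * (if selF A Lv Sv c j then 1 else 0) / DF A Lv Sv c)"
    unfolding GF_def using assms
    by (subst sum_ennreal) (auto intro!: divide_nonneg_nonneg DF_nonneg)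
  also have "(\<Sum>j\<in>A. m * Lv j * (if selF A Lv Sv c j then 1 else 0) / DF A Lv Sv c) = m * DF A Lv Sv c / DF A Lv Sv c"
    unfolding DF_def by (simp add: sum_divide_distrib[symmetric] sum_distrib_left mult.assoc)
  also have "\<dots> \<le> m" using assms by (cases "DF A Lv Sv c = 0") auto
  finally show ?thesis by (simp add: ennreal_leI)
qed

lemma GF_meas:
  assumes "finite A" "\<And>i. i \<in> A \<Longrightarrow> Lf i \<in> borel_measurable N" "\<And>i. i \<in> A \<Longrightarrow> Sf i \<in> borel_measurable N" "j \<in> A"
  shows "(\<lambda>z. GF A (\<lambda>i. Lf i z) (\<lambda>i. Sf i z) c m j) \<in> borel_measurable N"
  unfolding GF_def DF_def selF_def using assms by measurable

theorem theorem4p1: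
  fixes M :: "'w measure"
    and MX :: "'x measure" and MY :: "'y measure"
    and X :: "nat \<Rightarrow> 'w \<Rightarrow> 'x" and Y :: "nat \<Rightarrow> 'w \<Rightarrow> 'y"
    and f :: 'f and risk :: "'f \<Rightarrow> 'x \<Rightarrow> 'y \<Rightarrow> real"
    and s :: "'x \<Rightarrow> real" and n :: nat and \<gamma> :: real
  assumes "prob_space M"
    and X_meas: "\<And>i. i \<in> {1..n+1} \<Longrightarrow> X i \<in> measurable M MX"
    and Y_meas: "\<And>i. i \<in> {1..n+1} \<Longrightarrow> Y i \<in> measurable M MY"
    and exch: "\<And>\<pi>. \<pi> permutes {1..n+1} \<Longrightarrow>
        distr M (PiM {1..n+1} (\<lambda>_. MX \<Otimes>\<^sub>M MY)) (\<lambda>\<omega>. \<lambda>i\<in>{1..n+1}. (X (\<pi> i) \<omega>, Y (\<pi> i) \<omega>))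
      = distr M (PiM {1..n+1} (\<lambda>_. MX \<Otimes>\<^sub>M MY)) (\<lambda>\<omega>. \<lambda>i\<in>{1..n+1}. (X i \<omega>, Y i \<omega>))"
    and risk_meas: "(\<lambda>(x, y). risk f x y) \<in> borel_measurable (MX \<Otimes>\<^sub>M MY)"
    and risk_range: "\<And>x y. 0 \<le> risk f x y \<and> risk f x y \<le> 1"
    and s_meas: "s \<in> borel_measurable MX"
    and s_range: "\<And>x. 0 \<le> s x \<and> s x \<le> 1"
    and gamma: "0 < \<gamma>" "\<gamma> < 1"
  shows "(\<forall>\<omega>\<in>space M.
            0 \<le> E_gamma n (\<lambda>i. risk f (X i \<omega>) (Y i \<omega>)) (\<lambda>i. s (X i \<omega>)) \<gamma>)
       \<and> (\<integral>\<^sup>+ \<omega>. e2ennreal (ereal (risk f (X (n+1) \<omega>) (Y (n+1) \<omega>))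
               * E_gamma n (\<lambda>i. risk f (X i \<omega>) (Y i \<omega>)) (\<lambda>i. s (X i \<omega>)) \<gamma>) \<partial>M) \<le> 1"
proof -
  interpret P: prob_space M by fact
  define A where "A = {1..n+1}"
  define N where "N = PiM A (\<lambda>_. MX \<Otimes>\<^sub>M MY)"
  define c where "c = \<gamma> * real (n+1)"
  define m where "m = real (n+1)"
  define Lw where "Lw i \<omega> = risk f (X i \<omega>) (Y i \<omega>)" for i \<omega>
  define Sw where "Sw i \<omega> = s (X i \<omega>)" for i \<omega>
  define G where "G j \<omega> = GF A (\<lambda>i. Lw i \<omega>) (\<lambda>i. Sw i \<omega>) c m j" for j \<omega>
  define Psi where "Psi z = GF A (\<lambda>i. risk f (fst (z i)) (snd (z i))) (\<lambda>i. s (fst (z i))) c m (n+1)" for z :: "nat \<Rightarrow> 'x \<times> 'y"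
  define Zp where "Zp p \<omega> = (\<lambda>i\<in>A. (X (p i) \<omega>, Y (p i) \<omega>))" for p \<omega>
  have finA: "finite A" and nA: "n+1 \<in> A" unfolding A_def by auto
  have Lw_meas: "Lw i \<in> borel_measurable M" if "i \<in> A" for i
  proof -
    have "(\<lambda>\<omega>. (X i \<omega>, Y i \<omega>)) \<in> measurable M (MX \<Otimes>\<^sub>M MY)"
      using X_meas Y_meas that unfolding A_def by (auto intro!: measurable_Pair)
    from measurable_comp[OF this risk_meas] show ?thesis unfolding Lw_def by (simp add: comp_def)
  qed
  have Sw_meas: "Sw i \<in> borel_measurable M" if "i \<in> A" for i
    using measurable_comp[OF X_meas s_meas] that unfolding A_def Sw_def by (simp add: comp_def)
  have G_meas: "G j \<in> borel_measurable M" if "j \<in> A" for j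
    unfolding G_def by (rule GF_meas[OF finA _ _ that]) (auto intro: Lw_meas Sw_meas)
  have Zp_meas: "Zp p \<in> measurable M N" if "p permutes A" for p
    unfolding Zp_def N_def
  proof (rule measurable_restrict)
    fix i assume "i \<in> A"
    then have "p i \<in> A" using permutes_in_image[OF that] by simp
    then show "(\<lambda>\<omega>. (X (p i) \<omega>, Y (p i) \<omega>)) \<in> measurable M (MX \<Otimes>\<^sub>M MY)"
      using X_meas Y_meas unfolding A_def by (auto intro!: measurable_Pair)
  qed
  have Psi_meas: "Psi \<in> borel_measurable N"
    unfolding Psi_def N_def
  proof (rule GF_meas[OF finA _ _ nA])
    fix i assume i: "i \<in> A"
    have c: "(\<lambda>z. z i) \<in> measurable (PiM A (\<lambda>_. MX \<Otimes>\<^sub>M MY)) (MX \<Otimes>\<^sub>M MY)"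
      using i by (rule measurable_component_singleton)
    from measurable_comp[OF c risk_meas]
    show "(\<lambda>z. risk f (fst (z i)) (snd (z i))) \<in> borel_measurable (PiM A (\<lambda>_. MX \<Otimes>\<^sub>M MY))"
      by (simp add: comp_def case_prod_beta)
    from measurable_comp[OF measurable_comp[OF c measurable_fst] s_meas]
    show "(\<lambda>z. s (fst (z i))) \<in> borel_measurable (PiM A (\<lambda>_. MX \<Otimes>\<^sub>M MY))"
      by (simp add: comp_def)
  qed
  have Psi_Zp: "Psi (Zp p \<omega>) = G (p (n+1)) \<omega>" if "p permutes A" for p \<omega>
  proof -
    have "Psi (Zp p \<omega>) = GF A (\<lambda>i. Lw (p i) \<omega>) (\<lambda>i. Sw (p i) \<omega>) c m (n+1)"
      unfolding Psi_def by (rule GF_cong) (use nA in \<open>auto simp: Zp_def Lw_def Sw_def\<close>)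
    also have "\<dots> = G (p (n+1)) \<omega>" unfolding G_def by (rule GF_perm[OF that finA])
    finally show ?thesis .
  qed
  define Z0 where "Z0 \<omega> = (\<lambda>i\<in>A. (X i \<omega>, Y i \<omega>))" for \<omega>
  have Z0_meas: "Z0 \<in> measurable M N"
    unfolding Z0_def N_def
    by (rule measurable_restrict) (use X_meas Y_meas in \<open>auto intro!: measurable_Pair simp: A_def\<close>)
  have Psi_Z0: "Psi (Z0 \<omega>) = G (n+1) \<omega>" for \<omega>
    unfolding Psi_def G_def by (rule GF_cong) (use nA in \<open>auto simp: Z0_def Lw_def Sw_def\<close>)
  have exch': "distr M N (Zp p) = distr M N Z0" if "p permutes A" for p
  proof -
    have "p permutes {1..n+1}" using that by (simp add: A_def)
    from exch[OF this] show ?thesis unfolding N_def Zp_def Z0_def A_def .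
  qed
  have intG: "(\<integral>\<^sup>+\<omega>. G j \<omega> \<partial>M) = (\<integral>\<^sup>+\<omega>. G (n+1) \<omega> \<partial>M)" if j: "j \<in> A" for j
  proof -
    define p where "p = Transposition.transpose j (n+1)"
    have p: "p permutes A" unfolding p_def using j nA by (rule permutes_swap_id)
    have pj: "p (n+1) = j" unfolding p_def by simp
    have "(\<integral>\<^sup>+\<omega>. G j \<omega> \<partial>M) = (\<integral>\<^sup>+\<omega>. Psi (Zp p \<omega>) \<partial>M)"
      unfolding Psi_Zp[OF p] pj ..
    also have "\<dots> = (\<integral>\<^sup>+z. Psi z \<partial>distr M N (Zp p))"
      by (rule nn_integral_distr[symmetric, OF Zp_meas[OF p]]) (simp add: Psi_meas)
    also have "\<dots> = (\<integral>\<^sup>+z. Psi z \<partial>distr M N Z0)" unfolding exch'[OF p] ..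
    also have "\<dots> = (\<integral>\<^sup>+\<omega>. Psi (Z0 \<omega>) \<partial>M)"
      by (rule nn_integral_distr[OF Z0_meas]) (simp add: Psi_meas)
    also have "\<dots> = (\<integral>\<^sup>+\<omega>. G (n+1) \<omega> \<partial>M)"
      unfolding Psi_Z0 ..
    finally show ?thesis .
  qed
  have cardA: "card A = n+1" unfolding A_def by simp
  have "(\<Sum>j\<in>A. \<integral>\<^sup>+\<omega>. G j \<omega> \<partial>M) = (\<Sum>j\<in>A. \<integral>\<^sup>+\<omega>. G (n+1) \<omega> \<partial>M)"
    by (rule sum.cong) (use intG in auto)
  also have "\<dots> = of_nat (n+1) * (\<integral>\<^sup>+\<omega>. G (n+1) \<omega> \<partial>M)"
    by (simp only: sum_constant cardA)
  finally have sumG: "ennreal m * (\<integral>\<^sup>+\<omega>. G (n+1) \<omega> \<partial>M) = (\<Sum>j\<in>A. \<integral>\<^sup>+\<omega>. G j \<omega> \<partial>M)"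
    unfolding m_def ennreal_of_nat_eq_real_of_nat by simp
  have Lw_nn: "0 \<le> Lw i \<omega>" for i \<omega> unfolding Lw_def using risk_range by simp
  have "ennreal m * (\<integral>\<^sup>+\<omega>. G (n+1) \<omega> \<partial>M) = (\<integral>\<^sup>+\<omega>. (\<Sum>j\<in>A. G j \<omega>) \<partial>M)"
    unfolding sumG by (rule nn_integral_sum[symmetric]) (use G_meas in auto)
  also have "\<dots> \<le> (\<integral>\<^sup>+\<omega>. ennreal m \<partial>M)"
    unfolding G_def
    by (rule nn_integral_mono, rule GF_sum[OF finA]) (auto simp: Lw_nn m_def)
  also have "\<dots> = ennreal m" by (simp add: P.emeasure_space_1)
  finally have "ennreal m * (\<integral>\<^sup>+\<omega>. G (n+1) \<omega> \<partial>M) \<le> ennreal m * 1" by simp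
  then have G1: "(\<integral>\<^sup>+\<omega>. G (n+1) \<omega> \<partial>M) \<le> 1"
    by (subst (asm) ennreal_mult_le_mult_iff) (auto simp: m_def)
  have main: "(\<integral>\<^sup>+ \<omega>. e2ennreal (ereal (risk f (X (n+1) \<omega>) (Y (n+1) \<omega>))
               * E_gamma n (\<lambda>i. risk f (X i \<omega>) (Y i \<omega>)) (\<lambda>i. s (X i \<omega>)) \<gamma>) \<partial>M) \<le> (\<integral>\<^sup>+\<omega>. G (n+1) \<omega> \<partial>M)"
    unfolding G_def A_def c_def m_def Lw_def Sw_def
    by (rule nn_integral_mono) (rule pointwise, use risk_range in auto)
  have nn: "\<forall>\<omega>\<in>space M. 0 \<le> E_gamma n (\<lambda>i. risk f (X i \<omega>) (Y i \<omega>)) (\<lambda>i. s (X i \<omega>)) \<gamma>"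
    by (intro ballI E_nonneg) (simp add: risk_range)
  show ?thesis
    using nn order.trans[OF main G1] by (rule conjI)
qed

end
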